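(* Let $f:D\to\{0,1\}$, $D\subseteq\{0,1\}^n$, be a non-constant $n$-bit partial Boolean function that depends on $k$ bits and can be computed exactly by a quantum 1-query algorithm. Then $\mathrm{rank}(G_f(1,0))\in\{1,\dots,n\}$, $\mathrm{rank}(G_f(1,1))\in\{1,\dots,n\}$, and $$\mathrm{rank}(G_f(1,0))+\mathrm{rank}(G_f(1,1))\le 2n+2-k.$$
   Context: An $n$-bit partial Boolean function is a map $f:D\to\{0,1\}$ with $D\subseteq\{0,1\}^n$. For $x\in\{0,1\}^n$ let $|P(x)\rangle_1=(1,x_1,\dots,x_n)^T\in\mathbb{R}^{n+1}$. For $b\in\{0,1\}$, $G_f(1,b)$ is the $(n+1)\times|\{x\in D:f(x)=b\}|$ matrix whose columns are the vectors $|P(x)\rangle_1$ for all $x\in D$ with $f(x)=b$. $f$ depends on $k$ bits if $k$ is the minimum, over all multilinear polynomials $p$ with $p(x)=f(x)$ for all $x\in D$, of the number of variables occurring in $p$. A quantum 1-query algorithm works in a finite-dimensional Hilbert space with orthonormal basis $\{|i,j'\rangle\}$, $i\in\{0,\dots,n\}$; the oracle is $O_x|i,j'\rangle=(-1)^{x_i}|i,j'\rangle$ for $i\ge1$, $O_x|0,j'\rangle=|0,j'\rangle$; the algorithm applies input-independent unitaries $U_0,O_x,U_1$ to an initial state and performs a projective measurement with outcomes in $\{0,1\}$; it computes $f$ exactly if for every $x\in D$ the outcome is $f(x)$ with probability 1. *)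

theory Defs
  imports "Jordan_Normal_Form.Schur_Decomposition" "Jordan_Normal_Form.DL_Rank"
          "HOL-Library.List_Lexorder"
begin

text \<open>Inputs x in {0,1}^n are boolean lists of length n; bit x_i (1 <= i <= n) is x ! (i - 1).
  A partial Boolean function is a pair (D, f) with D a set of such lists and f :: bool list => bool
  (only its values on D matter).\<close>

definition bits :: "nat \<Rightarrow> bool list set" where
  "bits n = {x. length x = n}"

definition bit_val :: "bool \<Rightarrow> 'a::zero_neq_one" where
  "bit_val b = (if b then 1 else 0)"

definition Pvec1 :: "nat \<Rightarrow> bool list \<Rightarrow> real vec" where
  "Pvec1 n x = vec (n + 1) (\<lambda>i. if i = 0 then 1 else bit_val (x ! (i - 1)))"

text \<open>G_f(1,b): the (n+1) x |{x in D. f x = b}| matrix whose columns are the |P(x)>_1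
  (columns listed in lexicographic order of x; the order does not affect the rank).\<close>
definition Gf1 :: "nat \<Rightarrow> bool list set \<Rightarrow> (bool list \<Rightarrow> bool) \<Rightarrow> bool \<Rightarrow> real mat" where
  "Gf1 n D f b = mat_of_cols (n + 1) (map (Pvec1 n) (sorted_list_of_set {x \<in> D. f x = b}))"

text \<open>Multilinear polynomials in x_1..x_n with real coefficients, given by a coefficient
  function on subsets S of the (0-based) variable indices {0..<n}: p(x) = sum_S c_S prod_{i in S} x_i.\<close>
definition mlpoly_eval :: "nat \<Rightarrow> (nat set \<Rightarrow> real) \<Rightarrow> bool list \<Rightarrow> real" where
  "mlpoly_eval n c x = (\<Sum>S\<in>Pow {0..<n}. c S * (\<Prod>i\<in>S. bit_val (x ! i)))"

definition mlpoly_vars :: "nat \<Rightarrow> (nat set \<Rightarrow> real) \<Rightarrow> nat set" where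
  "mlpoly_vars n c = \<Union> {S \<in> Pow {0..<n}. c S \<noteq> 0}"

definition depends_on_bits :: "nat \<Rightarrow> bool list set \<Rightarrow> (bool list \<Rightarrow> bool) \<Rightarrow> nat \<Rightarrow> bool" where
  "depends_on_bits n D f k \<longleftrightarrow>
     k = (LEAST m. \<exists>c. (\<forall>x\<in>D. mlpoly_eval n c x = bit_val (f x)) \<and> card (mlpoly_vars n c) = m)"

text \<open>Quantum 1-query algorithms. The Hilbert space has orthonormal basis |i,j'>, i in {0..n},
  j' in {0..<w} (w >= 1 workspace dimension); |i,j'> is the standard basis vector with index i*w + j'.\<close>

definition query_op :: "nat \<Rightarrow> nat \<Rightarrow> bool list \<Rightarrow> complex mat" where
  "query_op n w x = mat ((n + 1) * w) ((n + 1) * w)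
     (\<lambda>(r, s). if r = s then (if r div w = 0 then 1 else (if x ! (r div w - 1) then -1 else 1)) else 0)"

definition unitary_mat :: "nat \<Rightarrow> complex mat \<Rightarrow> bool" where
  "unitary_mat N U \<longleftrightarrow> U \<in> carrier_mat N N \<and> mat_adjoint U * U = 1\<^sub>m N"

definition proj_mat :: "nat \<Rightarrow> complex mat \<Rightarrow> bool" where
  "proj_mat N P \<longleftrightarrow> P \<in> carrier_mat N N \<and> mat_adjoint P = P \<and> P * P = P"

text \<open>A projective measurement with outcomes in {0,1}: orthogonal projectors M0, M1 summing to identity
  (M b is the projector of outcome b; M True = outcome 1).\<close>
definition exact_1query :: "nat \<Rightarrow> bool list set \<Rightarrow> (bool list \<Rightarrow> bool) \<Rightarrow> bool" where
  "exact_1query n D f \<longleftrightarrow>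
     (\<exists>w::nat. \<exists>\<psi> U0 U1 (M :: bool \<Rightarrow> complex mat).
        let N = (n + 1) * w in
        w \<ge> 1 \<and> \<psi> \<in> carrier_vec N \<and> \<psi> \<bullet>c \<psi> = 1 \<and>
        unitary_mat N U0 \<and> unitary_mat N U1 \<and>
        proj_mat N (M False) \<and> proj_mat N (M True) \<and> M False + M True = 1\<^sub>m N \<and>
        (\<forall>x\<in>D. let \<phi> = U1 *\<^sub>v (query_op n w x *\<^sub>v (U0 *\<^sub>v \<psi>)) in
                  (M (f x) *\<^sub>v \<phi>) \<bullet>c (M (f x) *\<^sub>v \<phi>) = 1))"

end

theory Submission
  imports Defs
begin


definition ktriv :: "nat \<Rightarrow> 'a::field vec list \<Rightarrow> bool" where
  "ktriv N ws \<longleftrightarrow> (\<forall>c\<in>carrier_vec (length ws). mat_of_cols N ws *\<^sub>v c = 0\<^sub>v N \<longrightarrow> c = 0\<^sub>v (length ws))"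

lemma mvc_index:
  assumes "i < N" "dim_vec c = length ws"
  shows "(mat_of_cols N ws *\<^sub>v c) $ i = (\<Sum>j<length ws. ws ! j $ i * c $ j)"
  using assms by (auto simp: mult_mat_vec_def scalar_prod_def mat_of_cols_def row_def
      intro!: sum.cong)

lemma ktriv_distinct:
  assumes "ktriv N ws" "set ws \<subseteq> carrier_vec N"
  shows "distinct ws"
proof (rule ccontr)
  assume "\<not> distinct ws"
  then obtain i j where ij: "i < length ws" "j < length ws" "i \<noteq> j" "ws ! i = ws ! j"
    by (auto simp: distinct_conv_nth)
  define c where "c = vec (length ws) (\<lambda>l. if l = i then 1 else if l = j then -1 else (0::'a))"
  have cc: "c \<in> carrier_vec (length ws)" by (simp add: c_def)
  have "mat_of_cols N ws *\<^sub>v c = 0\<^sub>v N"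
  proof (rule eq_vecI)
    fix r assume r: "r < dim_vec (0\<^sub>v N :: 'a vec)"
    hence r': "r < N" by simp
    have "(\<Sum>l<length ws. ws ! l $ r * c $ l) =
       (\<Sum>l<length ws. (if l = i then ws ! i $ r else 0) - (if l = j then ws ! j $ r else 0))"
      using ij by (intro sum.cong) (auto simp: c_def)
    also have "\<dots> = 0" using ij by (simp add: sum_subtractf)
    finally have "(mat_of_cols N ws *\<^sub>v c) $ r = 0"
      using mvc_index[OF r', of c ws] cc by simp
    thus "(mat_of_cols N ws *\<^sub>v c) $ r = 0\<^sub>v N $ r" using r' by simp
  qed simp
  with assms(1) cc have "c = 0\<^sub>v (length ws)" unfolding ktriv_def by blast
  hence "c $ i = 0" using ij by simp
  thus False by (simp add: c_def ij)
qed

context vec_space begin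

lemma ktriv_lin_indpt:
  fixes ws :: "'a vec list"
  assumes "ktriv n ws" "set ws \<subseteq> carrier_vec n"
  shows "lin_indpt (set ws)" "distinct ws"
proof -
  show d: "distinct ws" by (rule ktriv_distinct[OF assms])
  have cv: "cols (mat_of_cols n ws) = ws" using assms(2) by simp
  show "lin_indpt (set ws)"
  proof
    assume "lin_dep (set ws)"
    then obtain c where "c \<in> carrier_vec (length ws)" "c \<noteq> 0\<^sub>v (length ws)" "mat_of_cols n ws *\<^sub>v c = 0\<^sub>v n"
      using lin_depE[of "mat_of_cols n ws" "length ws"] cv d by auto
    thus False using assms(1) unfolding ktriv_def by blast
  qed
qed

lemma ktriv_le:
  fixes ws :: "'a vec list"
  assumes "ktriv n ws" "set ws \<subseteq> carrier_vec n"
  shows "length ws \<le> n"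
proof -
  have "card (set ws) \<le> dim" using li_le_dim(2)[OF fin_dim _ ktriv_lin_indpt(1)[OF assms]] assms(2) by simp
  thus ?thesis using distinct_card[OF ktriv_lin_indpt(2)[OF assms]] dim_is_n by simp
qed

lemma ktriv_rank_ge:
  fixes ws :: "'a vec list"
  assumes "A \<in> carrier_mat n nc" "ktriv n ws" "set ws \<subseteq> set (cols A)"
  shows "length ws \<le> rank A"
proof -
  have sv: "set ws \<subseteq> carrier_vec n" using assms(1,3) cols_dim by blast
  show ?thesis using rank_ge_card_indpt[OF assms(1,3) ktriv_lin_indpt(1)[OF assms(2) sv]]
      distinct_card[OF ktriv_lin_indpt(2)[OF assms(2) sv]] by simp
qed

lemma rank_witness:
  assumes "A \<in> carrier_mat n nc"
  shows "\<exists>ws. set ws \<subseteq> set (cols A) \<and> length ws = rank A \<and> ktriv n ws"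
proof -
  obtain S where S: "maximal S (\<lambda>T. T \<subseteq> set (cols A) \<and> lin_indpt T)"
    using maximal_exists[of "(\<lambda>T. T \<subseteq> set (cols A) \<and> lin_indpt T)" "card (set (cols A))" "{}"]
    by (meson List.finite_set card_mono empty_iff empty_subsetI finite_lin_indpt2 rev_finite_subset)
  have rk: "rank A = card S" by (rule rank_card_indpt[OF assms S])
  have SA: "S \<subseteq> set (cols A)" and li: "lin_indpt S" using S by (auto simp: maximal_def)
  have "finite S" using SA finite_subset by blast
  then obtain ws where ws: "distinct ws" "set ws = S" using finite_distinct_list by blast
  have sv: "set ws \<subseteq> carrier_vec n" using assms SA ws cols_dim by blast
  have cv: "cols (mat_of_cols n ws) = ws" using sv by simp
  have "ktriv n ws" unfolding ktriv_def
  proof (intro ballI impI, rule ccontr)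
    fix c assume "c \<in> carrier_vec (length ws)" "mat_of_cols n ws *\<^sub>v c = 0\<^sub>v n" "c \<noteq> 0\<^sub>v (length ws)"
    hence "lin_dep (set ws)" using lin_depI[of "mat_of_cols n ws" "length ws" c] cv ws by auto
    thus False using li ws by simp
  qed
  thus ?thesis using ws SA rk distinct_card by metis
qed

end


lemma sum_split_add: "(\<Sum>j<L0+L1. g j) = (\<Sum>j<L0. g j) + (\<Sum>l<L1. g (L0 + l)) " for g :: "nat \<Rightarrow> 'a::comm_monoid_add"
  by (induct L1) (auto simp: add.assoc)

definition cf :: "real vec \<Rightarrow> nat \<Rightarrow> real" where
  "cf v i = (if i = 0 then v $ 0 else v $ 0 - 2 * v $ i)"

definition Bf :: "nat \<Rightarrow> (nat \<Rightarrow> real) \<Rightarrow> real vec \<Rightarrow> real vec \<Rightarrow> real" where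
  "Bf m a v w = (\<Sum>i<m. a i * cf v i * cf w i)"

lemma cf_lin:
  assumes "i < m" "0 < m" "dim_vec al = length ws"
  shows "cf (mat_of_cols m ws *\<^sub>v al) i = (\<Sum>j<length ws. al $ j * cf (ws ! j) i)"
proof -
  have e: "(mat_of_cols m ws *\<^sub>v al) $ i = (\<Sum>j<length ws. al $ j * ws ! j $ i)" if "i < m" for i
  proof -
    have "(mat_of_cols m ws *\<^sub>v al) $ i = (\<Sum>j<length ws. ws ! j $ i * al $ j)"
      by (rule mvc_index[OF that assms(3)])
    also have "\<dots> = (\<Sum>j<length ws. al $ j * ws ! j $ i)" by (simp add: mult.commute)
    finally show ?thesis .
  qed
  have "cf (mat_of_cols m ws *\<^sub>v al) i = (if i = 0 then (\<Sum>j<length ws. al $ j * ws ! j $ 0)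
     else (\<Sum>j<length ws. al $ j * ws ! j $ 0) - 2 * (\<Sum>j<length ws. al $ j * ws ! j $ i))"
    by (simp only: cf_def e[OF assms(1)] e[OF assms(2)])
  also have "\<dots> = (\<Sum>j<length ws. al $ j * cf (ws ! j) i)"
    by (auto simp: cf_def sum_subtractf sum_distrib_left algebra_simps)
  finally show ?thesis .
qed

lemma Bf_lin:
  assumes "0 < m" "dim_vec al = length ws0" "dim_vec be = length ws1"
    and orth: "\<And>v w. v \<in> set ws0 \<Longrightarrow> w \<in> set ws1 \<Longrightarrow> Bf m a v w = 0"
  shows "Bf m a (mat_of_cols m ws0 *\<^sub>v al) (mat_of_cols m ws1 *\<^sub>v be) = 0"
proof -
  have "Bf m a (mat_of_cols m ws0 *\<^sub>v al) (mat_of_cols m ws1 *\<^sub>v be)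
     = (\<Sum>i<m. a i * (\<Sum>j<length ws0. al $ j * cf (ws0 ! j) i) * (\<Sum>l<length ws1. be $ l * cf (ws1 ! l) i))"
    unfolding Bf_def using assms by (simp add: cf_lin)
  also have "\<dots> = (\<Sum>i<m. \<Sum>j<length ws0. \<Sum>l<length ws1. al $ j * be $ l * (a i * cf (ws0 ! j) i * cf (ws1 ! l) i))"
    by (simp add: sum_distrib_left sum_distrib_right algebra_simps)
  also have "\<dots> = (\<Sum>j<length ws0. \<Sum>l<length ws1. al $ j * be $ l * Bf m a (ws0 ! j) (ws1 ! l))"
    unfolding Bf_def sum_distrib_left
    by (subst sum.swap, rule sum.cong, simp, subst sum.swap, simp)
  also have "\<dots> = 0" using orth by (auto intro!: sum.neutral)
  finally show ?thesis .
qed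



lemma cf_zero_imp:
  assumes "v \<in> carrier_vec m" "\<And>i. i < m \<Longrightarrow> cf v i = 0"
  shows "v = 0\<^sub>v m"
proof (rule eq_vecI)
  fix i assume "i < dim_vec (0\<^sub>v m)"
  hence i: "i < m" by simp
  hence "cf v 0 = 0" "cf v i = 0" using assms(2) by auto
  thus "v $ i = 0\<^sub>v m $ i" using i by (auto simp: cf_def split: if_splits)
qed (use assms in auto)

lemma main_count:
  fixes ws0 ws1 :: "real vec list" and a :: "nat \<Rightarrow> real"
  assumes m: "0 < m" and apos: "\<And>i. i < m \<Longrightarrow> 0 \<le> a i"
    and c0: "set ws0 \<subseteq> carrier_vec m" and c1: "set ws1 \<subseteq> carrier_vec m"
    and k0: "ktriv m ws0" and k1: "ktriv m ws1"
    and orth: "\<And>v w. v \<in> set ws0 \<Longrightarrow> w \<in> set ws1 \<Longrightarrow> Bf m a v w = 0"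
  shows "length ws0 + length ws1 \<le> m + card {i. i < m \<and> a i = 0}"
proof -
  define Q where "Q = {i. i < m \<and> a i = 0}"
  define q where "q = card Q"
  define qs where "qs = sorted_list_of_set Q"
  have fQ: "finite Q" unfolding Q_def by auto
  have qs: "set qs = Q" "length qs = q" using fQ by (auto simp: qs_def q_def)
  define N where "N = m + q"
  define P0 where "P0 = (\<lambda>v. vec N (\<lambda>k. if k < m then cf v k else 0))"
  define P1 where "P1 = (\<lambda>w. vec N (\<lambda>k. if k < m then (if 0 < a k then cf w k else 0) else cf w (qs ! (k - m))))"
  define L0 where "L0 = length ws0"
  define L1 where "L1 = length ws1"
  define ws where "ws = map P0 ws0 @ map P1 ws1"
  have lws: "length ws = L0 + L1" by (simp add: ws_def L0_def L1_def)
  have cws: "set ws \<subseteq> carrier_vec N" by (auto simp: ws_def P0_def P1_def)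
  have kt: "ktriv N ws" unfolding ktriv_def
  proof (intro ballI impI)
    fix g assume g: "g \<in> carrier_vec (length ws)" and eq: "mat_of_cols N ws *\<^sub>v g = 0\<^sub>v N"
    define al where "al = vec L0 (\<lambda>j. g $ j)"
    define be where "be = vec L1 (\<lambda>j. g $ (L0 + j))"
    define X where "X = mat_of_cols m ws0 *\<^sub>v al"
    define Y where "Y = mat_of_cols m ws1 *\<^sub>v be"
    have dal: "dim_vec al = length ws0" and dbe: "dim_vec be = length ws1"
      by (auto simp: al_def be_def L0_def L1_def)
    have cX: "\<And>i. i < m \<Longrightarrow> cf X i = (\<Sum>j<L0. al $ j * cf (ws0 ! j) i)"
      unfolding X_def using cf_lin[OF _ m dal] L0_def by simp
    have cY: "\<And>i. i < m \<Longrightarrow> cf Y i = (\<Sum>j<L1. be $ j * cf (ws1 ! j) i)"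
      unfolding Y_def using cf_lin[OF _ m dbe] L1_def by simp
    have entry: "\<And>k. k < N \<Longrightarrow> (\<Sum>j<L0. al $ j * P0 (ws0 ! j) $ k) + (\<Sum>j<L1. be $ j * P1 (ws1 ! j) $ k) = 0"
    proof -
      fix k assume k: "k < N"
      have "(mat_of_cols N ws *\<^sub>v g) $ k = (\<Sum>j<L0+L1. ws ! j $ k * g $ j)"
        using mvc_index[OF k, of g ws] g lws by simp
      also have "\<dots> = (\<Sum>j<L0. al $ j * P0 (ws0 ! j) $ k) + (\<Sum>j<L1. be $ j * P1 (ws1 ! j) $ k)"
        unfolding sum_split_add
        by (auto simp: ws_def nth_append L0_def L1_def al_def be_def mult.commute intro!: sum.cong arg_cong2[where f="(+)"])
      finally show "?thesis k" using eq k by simp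
    qed
    have e1: "\<And>i. i < m \<Longrightarrow> cf X i + (if 0 < a i then cf Y i else 0) = 0"
    proof -
      fix i assume i: "i < m"
      have "N > i" using i N_def by simp
      from entry[OF this] i show "?thesis i"
        by (auto simp: P0_def P1_def cX cY nth_map L0_def L1_def N_def split: if_splits)
    qed
    have e2: "\<And>i. i < m \<Longrightarrow> a i = 0 \<Longrightarrow> cf Y i = 0"
    proof -
      fix i assume i: "i < m" "a i = 0"
      hence "i \<in> set qs" using qs Q_def by auto
      then obtain t where t: "t < q" "qs ! t = i" using qs by (auto simp: in_set_conv_nth)
      have "m + t < N" using t N_def by simp
      from entry[OF this] t i show "cf Y i = 0"
        by (auto simp: P0_def P1_def cY nth_map L0_def L1_def N_def)
    qed
    have Bxy: "Bf m a X Y = 0" unfolding X_def Y_def by (rule Bf_lin[OF m dal dbe orth])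
    have "Bf m a X Y = - (\<Sum>i<m. a i * (cf X i)^2)"
      unfolding Bf_def sum_negf[symmetric]
    proof (rule sum.cong)
      fix i assume "i \<in> {..<m}"
      hence i: "i < m" by simp
      show "a i * cf X i * cf Y i = - (a i * (cf X i)^2)"
      proof (cases "a i = 0")
        case True thus ?thesis by simp
      next
        case False
        hence "0 < a i" using apos i by (simp add: less_le)
        hence "cf Y i = - cf X i" using e1[OF i] by simp
        thus ?thesis by (simp add: power2_eq_square)
      qed
    qed simp
    hence s0: "(\<Sum>i<m. a i * (cf X i)^2) = 0" using Bxy by simp
    have "\<forall>i\<in>{..<m}. a i * (cf X i)^2 = 0"
      using sum_nonneg_eq_0_iff[of "{..<m}" "\<lambda>i. a i * (cf X i)^2"] s0 apos by auto
    hence cX0: "\<And>i. i < m \<Longrightarrow> cf X i = 0"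
    proof -
      fix i assume i: "i < m"
      show "cf X i = 0"
      proof (cases "a i = 0")
        case True thus ?thesis using e1[OF i] by simp
      next
        case False thus ?thesis using \<open>\<forall>i\<in>{..<m}. a i * (cf X i)^2 = 0\<close> i by auto
      qed
    qed
    have cY0: "\<And>i. i < m \<Longrightarrow> cf Y i = 0"
    proof -
      fix i assume i: "i < m"
      show "cf Y i = 0"
      proof (cases "a i = 0")
        case True thus ?thesis using e2[OF i] by simp
      next
        case False hence "0 < a i" using apos i by (simp add: less_le)
        thus ?thesis using e1[OF i] cX0[OF i] by simp
      qed
    qed
    have "dim_vec X = m" unfolding X_def by simp
    hence X0: "X = 0\<^sub>v m" by (intro cf_zero_imp[OF carrier_vecI cX0])
    have alc: "al \<in> carrier_vec (length ws0)" by (rule carrier_vecI[OF dal])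
    have k0': "\<forall>c\<in>carrier_vec (length ws0). mat_of_cols m ws0 *\<^sub>v c = 0\<^sub>v m \<longrightarrow> c = 0\<^sub>v (length ws0)"
      using k0 unfolding ktriv_def .
    have "mat_of_cols m ws0 *\<^sub>v al = 0\<^sub>v m" using X0 unfolding X_def .
    from k0'[rule_format, OF alc this] have al0: "al = 0\<^sub>v L0" unfolding L0_def .
    have "dim_vec Y = m" unfolding Y_def by simp
    hence Y0: "Y = 0\<^sub>v m" by (intro cf_zero_imp[OF carrier_vecI cY0])
    have bec: "be \<in> carrier_vec (length ws1)" by (rule carrier_vecI[OF dbe])
    have k1': "\<forall>c\<in>carrier_vec (length ws1). mat_of_cols m ws1 *\<^sub>v c = 0\<^sub>v m \<longrightarrow> c = 0\<^sub>v (length ws1)"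
      using k1 unfolding ktriv_def .
    have "mat_of_cols m ws1 *\<^sub>v be = 0\<^sub>v m" using Y0 unfolding Y_def .
    from k1'[rule_format, OF bec this] have be0: "be = 0\<^sub>v L1" unfolding L1_def .
    show "g = 0\<^sub>v (length ws)"
    proof (rule eq_vecI)
      fix j assume "j < dim_vec (0\<^sub>v (length ws))"
      hence j: "j < L0 + L1" using lws by simp
      show "g $ j = 0\<^sub>v (length ws) $ j"
      proof (cases "j < L0")
        case True
        have "al $ j = 0" using al0 True by simp
        thus ?thesis using True j lws by (simp add: al_def)
      next
        case False
        hence "j - L0 < L1" using j by simp
        hence "be $ (j - L0) = 0" using be0 by simp
        hence "g $ (L0 + (j - L0)) = 0" using \<open>j - L0 < L1\<close> by (simp add: be_def)
        moreover have "L0 + (j - L0) = j" using False by simp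
        ultimately show ?thesis using j lws by simp
      qed
    qed (use g in auto)
  qed
  have "length ws \<le> N" by (rule vec_space.ktriv_le[OF kt cws])
  thus ?thesis using lws N_def q_def Q_def L0_def L1_def by simp
qed



lemma Bf_lin1:
  assumes "0 < m" "dim_vec g = length ws"
  shows "Bf m a (mat_of_cols m ws *\<^sub>v g) u = (\<Sum>j<length ws. g $ j * Bf m a (ws ! j) u)"
proof -
  have "Bf m a (mat_of_cols m ws *\<^sub>v g) u = (\<Sum>i<m. a i * (\<Sum>j<length ws. g $ j * cf (ws ! j) i) * cf u i)"
    unfolding Bf_def using assms by (simp add: cf_lin)
  also have "\<dots> = (\<Sum>i<m. \<Sum>j<length ws. g $ j * (a i * cf (ws ! j) i * cf u i))"
    by (simp add: sum_distrib_left sum_distrib_right algebra_simps)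
  also have "\<dots> = (\<Sum>j<length ws. g $ j * Bf m a (ws ! j) u)"
    unfolding Bf_def sum_distrib_left by (rule sum.swap)
  finally show ?thesis .
qed

lemma Bf_zero: "Bf m a (0\<^sub>v m) u = 0"
  unfolding Bf_def cf_def by (auto intro!: sum.neutral)

lemma rank_le_count:
  fixes ws0 :: "real vec list" and a :: "nat \<Rightarrow> real"
  assumes m: "0 < m" and c0: "set ws0 \<subseteq> carrier_vec m" and u: "u \<in> carrier_vec m"
    and k0: "ktriv m ws0"
    and orth: "\<And>v. v \<in> set ws0 \<Longrightarrow> Bf m a v u = 0" and uu: "Bf m a u u \<noteq> 0"
  shows "length ws0 + 1 \<le> m"
proof -
  define L0 where "L0 = length ws0"
  define ws where "ws = ws0 @ [u]"
  have lws: "length ws = L0 + 1" by (simp add: ws_def L0_def)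
  have cws: "set ws \<subseteq> carrier_vec m" using c0 u by (auto simp: ws_def)
  have kt: "ktriv m ws" unfolding ktriv_def
  proof (intro ballI impI)
    fix g assume g: "g \<in> carrier_vec (length ws)" and eq: "mat_of_cols m ws *\<^sub>v g = 0\<^sub>v m"
    have dg: "dim_vec g = length ws" using g by simp
    have "Bf m a (mat_of_cols m ws *\<^sub>v g) u = (\<Sum>j<L0+1. g $ j * Bf m a (ws ! j) u)"
      using Bf_lin1[OF m dg] lws by simp
    also have "\<dots> = g $ L0 * Bf m a u u"
      using orth by (simp add: ws_def nth_append L0_def)
    finally have "g $ L0 * Bf m a u u = 0" using eq Bf_zero by simp
    hence gL: "g $ L0 = 0" using uu by simp
    define al where "al = vec L0 (\<lambda>j. g $ j)"
    have alc: "al \<in> carrier_vec (length ws0)" by (simp add: al_def L0_def)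
    have "mat_of_cols m ws0 *\<^sub>v al = 0\<^sub>v m"
    proof (rule eq_vecI)
      fix i assume "i < dim_vec (0\<^sub>v m :: real vec)"
      hence i: "i < m" by simp
      have "(mat_of_cols m ws0 *\<^sub>v al) $ i = (\<Sum>j<L0. ws0 ! j $ i * al $ j)"
        using mvc_index[OF i, of al ws0] by (simp add: al_def L0_def)
      also have "\<dots> = (\<Sum>j<L0+1. ws ! j $ i * g $ j)"
        using gL by (simp add: al_def ws_def nth_append L0_def)
      also have "\<dots> = (mat_of_cols m ws *\<^sub>v g) $ i"
        using mvc_index[OF i dg] lws by simp
      also have "\<dots> = 0" using eq i by simp
      finally show "(mat_of_cols m ws0 *\<^sub>v al) $ i = 0\<^sub>v m $ i" using i by simp
    qed simp
    from k0[unfolded ktriv_def, rule_format, OF alc this] have al0: "al = 0\<^sub>v L0" unfolding L0_def .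
    show "g = 0\<^sub>v (length ws)"
    proof (rule eq_vecI)
      fix j assume "j < dim_vec (0\<^sub>v (length ws) :: real vec)"
      hence j: "j < L0 + 1" using lws by simp
      show "g $ j = 0\<^sub>v (length ws) $ j"
      proof (cases "j < L0")
        case True
        have "al $ j = 0" using al0 True by simp
        thus ?thesis using True j lws by (simp add: al_def)
      next
        case False
        hence "j = L0" using j by simp
        thus ?thesis using gL j lws by simp
      qed
    qed (use g in auto)
  qed
  have "length ws \<le> m" by (rule vec_space.ktriv_le[OF kt cws])
  thus ?thesis using lws L0_def by simp
qed



lemma cinner_sum: "v \<in> carrier_vec N \<Longrightarrow> w \<in> carrier_vec N \<Longrightarrow> v \<bullet>c w = (\<Sum>r<N. v $ r * cnj (w $ r))"
  for v w :: "complex vec"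
  by (auto simp: scalar_prod_def lessThan_atLeast0)

lemma adj_index: "A \<in> carrier_mat N N \<Longrightarrow> s < N \<Longrightarrow> r < N \<Longrightarrow> mat_adjoint A $$ (s, r) = cnj (A $$ (r, s))"
  for A :: "complex mat"
  by (auto simp: mat_adjoint_def mat_of_rows_def)

lemma adj_carrier: "A \<in> carrier_mat N N \<Longrightarrow> mat_adjoint A \<in> carrier_mat N N"
  for A :: "complex mat"
  by (auto simp: mat_adjoint_def)

lemma adj_cscalar:
  fixes A :: "complex mat"
  assumes A: "A \<in> carrier_mat N N" and v: "v \<in> carrier_vec N" and w: "w \<in> carrier_vec N"
  shows "(A *\<^sub>v v) \<bullet>c w = v \<bullet>c (mat_adjoint A *\<^sub>v w)"
proof -
  have AV: "A *\<^sub>v v \<in> carrier_vec N" using A v by simp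
  have AW: "mat_adjoint A *\<^sub>v w \<in> carrier_vec N" using adj_carrier[OF A] w by simp
  have e1: "(A *\<^sub>v v) $ r = (\<Sum>s<N. A $$ (r, s) * v $ s)" if "r < N" for r
    using A v that by (auto simp: mult_mat_vec_def scalar_prod_def lessThan_atLeast0 row_def)
  have e2: "(mat_adjoint A *\<^sub>v w) $ s = (\<Sum>r<N. cnj (A $$ (r, s)) * w $ r)" if "s < N" for s
  proof -
    have "(mat_adjoint A *\<^sub>v w) $ s = (\<Sum>r<N. mat_adjoint A $$ (s, r) * w $ r)"
      using adj_carrier[OF A] w that by (auto simp: mult_mat_vec_def scalar_prod_def lessThan_atLeast0 row_def)
    also have "\<dots> = (\<Sum>r<N. cnj (A $$ (r, s)) * w $ r)"
      using adj_index[OF A that] by simp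
    finally show ?thesis .
  qed
  have "(A *\<^sub>v v) \<bullet>c w = (\<Sum>r<N. (\<Sum>s<N. A $$ (r, s) * v $ s) * cnj (w $ r))"
    using cinner_sum[OF AV w] e1 by simp
  also have "\<dots> = (\<Sum>s<N. v $ s * (\<Sum>r<N. A $$ (r, s) * cnj (w $ r)))"
    by (simp add: sum_distrib_left sum_distrib_right algebra_simps) (rule sum.swap)
  also have "\<dots> = (\<Sum>s<N. v $ s * cnj ((mat_adjoint A *\<^sub>v w) $ s))"
    using e2 by (simp add: cnj_sum)
  also have "\<dots> = v \<bullet>c (mat_adjoint A *\<^sub>v w)" using cinner_sum[OF v AW] by simp
  finally show ?thesis .
qed

lemma unitary_pres:
  assumes U: "unitary_mat N U" and v: "v \<in> carrier_vec N" and w: "w \<in> carrier_vec N"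
  shows "(U *\<^sub>v v) \<bullet>c (U *\<^sub>v w) = v \<bullet>c w"
proof -
  have UC: "U \<in> carrier_mat N N" and UU: "mat_adjoint U * U = 1\<^sub>m N" using U by (auto simp: unitary_mat_def)
  have "(U *\<^sub>v v) \<bullet>c (U *\<^sub>v w) = v \<bullet>c (mat_adjoint U *\<^sub>v (U *\<^sub>v w))"
    using adj_cscalar[OF UC v] UC w by simp
  also have "mat_adjoint U *\<^sub>v (U *\<^sub>v w) = (mat_adjoint U * U) *\<^sub>v w"
    using assoc_mult_mat_vec[of "mat_adjoint U" N N U N w] adj_carrier[OF UC] UC w by simp
  also have "\<dots> = w" using UU w by simp
  finally show ?thesis .
qed

lemma proj_self:
  assumes P: "proj_mat N P" and v: "v \<in> carrier_vec N"
  shows "(P *\<^sub>v v) \<bullet>c (P *\<^sub>v v) = v \<bullet>c (P *\<^sub>v v)"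
proof -
  have PC: "P \<in> carrier_mat N N" and PA: "mat_adjoint P = P" and PP: "P * P = P"
    using P by (auto simp: proj_mat_def)
  have "(P *\<^sub>v v) \<bullet>c (P *\<^sub>v v) = v \<bullet>c (P *\<^sub>v (P *\<^sub>v v))"
    using adj_cscalar[OF PC v, of "P *\<^sub>v v"] PC v PA by simp
  also have "P *\<^sub>v (P *\<^sub>v v) = (P * P) *\<^sub>v v"
    using assoc_mult_mat_vec[of P N N P N v] PC v by simp
  finally show ?thesis using PP by simp
qed



lemma cinner_add_right:
  fixes v a b :: "complex vec"
  assumes "v \<in> carrier_vec N" "a \<in> carrier_vec N" "b \<in> carrier_vec N"
  shows "v \<bullet>c (a + b) = v \<bullet>c a + v \<bullet>c b"
proof -
  have "a + b \<in> carrier_vec N" using assms by simp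
  thus ?thesis using assms by (simp add: cinner_sum[of _ N] sum.distrib algebra_simps)
qed

lemma meas_zero:
  assumes P: "proj_mat N P" and R: "proj_mat N R" and PR: "P + R = 1\<^sub>m N"
    and phi: "\<phi> \<in> carrier_vec N" and n1: "\<phi> \<bullet>c \<phi> = 1" and p1: "(P *\<^sub>v \<phi>) \<bullet>c (P *\<^sub>v \<phi>) = 1"
  shows "R *\<^sub>v \<phi> = 0\<^sub>v N"
proof -
  have PC: "P \<in> carrier_mat N N" and RC: "R \<in> carrier_mat N N" using P R by (auto simp: proj_mat_def)
  have "(P + R) *\<^sub>v \<phi> = P *\<^sub>v \<phi> + R *\<^sub>v \<phi>" using add_mult_distrib_mat_vec[OF PC RC phi] .
  hence "\<phi> = P *\<^sub>v \<phi> + R *\<^sub>v \<phi>" using PR phi by simp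
  hence "\<phi> \<bullet>c \<phi> = \<phi> \<bullet>c (P *\<^sub>v \<phi>) + \<phi> \<bullet>c (R *\<^sub>v \<phi>)"
    using cinner_add_right[OF phi, of "P *\<^sub>v \<phi>" "R *\<^sub>v \<phi>"] PC RC phi by (metis mult_mat_vec_carrier)
  hence "\<phi> \<bullet>c (R *\<^sub>v \<phi>) = 0" using n1 p1 proj_self[OF P phi] by simp
  hence "(R *\<^sub>v \<phi>) \<bullet>c (R *\<^sub>v \<phi>) = 0" using proj_self[OF R phi] by simp
  moreover have "R *\<^sub>v \<phi> \<in> carrier_vec N" using RC phi by simp
  ultimately show ?thesis using conjugate_square_eq_0_vec by blast
qed

lemma meas_orth:
  assumes P: "proj_mat N P" and R: "proj_mat N R" and PR: "P + R = 1\<^sub>m N"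
    and phi: "\<phi> \<in> carrier_vec N" and n1: "\<phi> \<bullet>c \<phi> = 1" and p1: "(P *\<^sub>v \<phi>) \<bullet>c (P *\<^sub>v \<phi>) = 1"
    and chi: "\<chi> \<in> carrier_vec N" and n2: "\<chi> \<bullet>c \<chi> = 1" and r1: "(R *\<^sub>v \<chi>) \<bullet>c (R *\<^sub>v \<chi>) = 1"
  shows "\<phi> \<bullet>c \<chi> = 0"
proof -
  have PC: "P \<in> carrier_mat N N" and RC: "R \<in> carrier_mat N N" and PA: "mat_adjoint P = P"
    using P R by (auto simp: proj_mat_def)
  have RP: "R + P = 1\<^sub>m N" using PR comm_add_mat[OF PC RC] by simp
  have R0: "R *\<^sub>v \<phi> = 0\<^sub>v N" by (rule meas_zero[OF P R PR phi n1 p1])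
  have P0: "P *\<^sub>v \<chi> = 0\<^sub>v N" by (rule meas_zero[OF R P RP chi n2 r1])
  have "(P + R) *\<^sub>v \<phi> = P *\<^sub>v \<phi> + R *\<^sub>v \<phi>" using add_mult_distrib_mat_vec[OF PC RC phi] .
  hence "\<phi> = P *\<^sub>v \<phi>" using PR phi R0 PC by simp
  hence "\<phi> \<bullet>c \<chi> = (P *\<^sub>v \<phi>) \<bullet>c \<chi>" by simp
  also have "\<dots> = \<phi> \<bullet>c (P *\<^sub>v \<chi>)" using adj_cscalar[OF PC phi chi] PA by simp
  also have "\<dots> = 0" using P0 phi by simp
  finally show ?thesis .
qed



definition sg :: "bool list \<Rightarrow> nat \<Rightarrow> real" where
  "sg x i = (if i = 0 then 1 else if x ! (i - 1) then -1 else 1)"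

lemma sum_split_add': "(\<Sum>j<L0+L1. g j) = (\<Sum>j<L0. g j) + (\<Sum>l<L1. g (L0 + l)) " for g :: "nat \<Rightarrow> 'a::comm_monoid_add"
  by (induct L1) (auto simp: add.assoc)

lemma group_sum:
  fixes h b :: "nat \<Rightarrow> real"
  assumes "0 < w"
  shows "(\<Sum>r<k*w. h (r div w) * b r) = (\<Sum>i<k. h i * (\<Sum>j<w. b (i*w+j)))"
proof (induct k)
  case 0 then show ?case by simp
next
  case (Suc k)
  have "(\<Sum>r<Suc k*w. h (r div w) * b r) = (\<Sum>r<k*w + w. h (r div w) * b r)" by (simp add: add.commute)
  also have "\<dots> = (\<Sum>r<k*w. h (r div w) * b r) + (\<Sum>l<w. h ((k*w + l) div w) * b (k*w+l))"
    by (rule sum_split_add')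
  also have "(\<Sum>l<w. h ((k*w + l) div w) * b (k*w+l)) = (\<Sum>l<w. h k * b (k*w+l))"
    using assms by (intro sum.cong) auto
  finally show ?case using Suc by (simp add: sum_distrib_left)
qed

lemma qop_index:
  assumes "r < (n+1)*w" "\<chi> \<in> carrier_vec ((n+1)*w)"
  shows "(query_op n w x *\<^sub>v \<chi>) $ r = complex_of_real (sg x (r div w)) * \<chi> $ r"
proof -
  have "(query_op n w x *\<^sub>v \<chi>) $ r = (\<Sum>s\<in>{0..<(n+1)*w}. (if r = s then (if r div w = 0 then 1 else (if x ! (r div w - 1) then -1 else 1)) else 0) * \<chi> $ s)"
    using assms by (auto simp: query_op_def mult_mat_vec_def scalar_prod_def row_def intro!: sum.cong)
  also have "\<dots> = (if r div w = 0 then 1 else (if x ! (r div w - 1) then -1 else 1)) * \<chi> $ r"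
    using assms(1) by (simp add: if_distrib[of "\<lambda>t. t * _"] sum.delta cong: if_cong)
  finally show ?thesis by (simp add: sg_def)
qed

lemma qinner:
  assumes chi: "\<chi> \<in> carrier_vec ((n+1)*w)"
  shows "(query_op n w x *\<^sub>v \<chi>) \<bullet>c (query_op n w y *\<^sub>v \<chi>)
     = complex_of_real (\<Sum>r<(n+1)*w. sg x (r div w) * sg y (r div w) * (cmod (\<chi> $ r))^2)"
proof -
  have qc: "query_op n w z \<in> carrier_mat ((n+1)*w) ((n+1)*w)" for z
    unfolding query_op_def by (rule mat_carrier)
  have c1: "query_op n w x *\<^sub>v \<chi> \<in> carrier_vec ((n+1)*w)" "query_op n w y *\<^sub>v \<chi> \<in> carrier_vec ((n+1)*w)"
    using mult_mat_vec_carrier[OF qc chi] by auto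
  have "(query_op n w x *\<^sub>v \<chi>) \<bullet>c (query_op n w y *\<^sub>v \<chi>)
     = (\<Sum>r<(n+1)*w. (complex_of_real (sg x (r div w)) * \<chi> $ r) * cnj (complex_of_real (sg y (r div w)) * \<chi> $ r))"
    unfolding cinner_sum[OF c1] by (rule sum.cong) (simp_all only: lessThan_iff qop_index[OF _ chi])
  also have "\<dots> = (\<Sum>r<(n+1)*w. complex_of_real (sg x (r div w) * sg y (r div w) * (cmod (\<chi> $ r))^2))"
  proof (rule sum.cong)
    fix r
    have "\<chi> $ r * cnj (\<chi> $ r) = complex_of_real ((cmod (\<chi> $ r))^2)"
      using complex_norm_square[of "\<chi> $ r"] by simp
    thus "(complex_of_real (sg x (r div w)) * \<chi> $ r) * cnj (complex_of_real (sg y (r div w)) * \<chi> $ r)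
       = complex_of_real (sg x (r div w) * sg y (r div w) * (cmod (\<chi> $ r))^2)"
      by (simp add: algebra_simps)
  qed simp
  finally show ?thesis by simp
qed



lemma sg_sq: "sg x i * sg x i = 1" by (simp add: sg_def)

lemma quantum_weights:
  assumes "exact_1query n D f"
  shows "\<exists>a::nat \<Rightarrow> real. (\<forall>i. 0 \<le> a i) \<and> (\<Sum>i<n+1. a i) = 1 \<and>
     (\<forall>x\<in>D. \<forall>y\<in>D. f x \<noteq> f y \<longrightarrow> (\<Sum>i<n+1. a i * sg x i * sg y i) = 0)"
proof -
  obtain w \<psi> U0 U1 and M :: "bool \<Rightarrow> complex mat" where
    w: "w \<ge> 1" and psi: "\<psi> \<in> carrier_vec ((n+1)*w)" and pn: "\<psi> \<bullet>c \<psi> = 1"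
    and U0: "unitary_mat ((n+1)*w) U0" and U1: "unitary_mat ((n+1)*w) U1"
    and MF: "proj_mat ((n+1)*w) (M False)" and MT: "proj_mat ((n+1)*w) (M True)"
    and MS: "M False + M True = 1\<^sub>m ((n+1)*w)"
    and ok: "\<And>x. x \<in> D \<Longrightarrow> (M (f x) *\<^sub>v (U1 *\<^sub>v (query_op n w x *\<^sub>v (U0 *\<^sub>v \<psi>)))) \<bullet>c
                   (M (f x) *\<^sub>v (U1 *\<^sub>v (query_op n w x *\<^sub>v (U0 *\<^sub>v \<psi>)))) = 1"
    using assms unfolding exact_1query_def Let_def by blast
  define N where "N = (n+1)*w"
  have wpos: "0 < w" using w by simp
  have U0C: "U0 \<in> carrier_mat N N" and U1C: "U1 \<in> carrier_mat N N"
    using U0 U1 by (auto simp: unitary_mat_def N_def)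
  define \<chi> where "\<chi> = U0 *\<^sub>v \<psi>"
  have chi: "\<chi> \<in> carrier_vec N" using U0C psi by (simp add: \<chi>_def N_def)
  have cn: "\<chi> \<bullet>c \<chi> = 1" using unitary_pres[OF U0 psi psi] pn by (simp add: \<chi>_def)
  define b where "b r = (cmod (\<chi> $ r))^2" for r
  define a where "a i = (\<Sum>j<w. b (i*w+j))" for i
  have a0: "\<forall>i. 0 \<le> a i" by (auto simp: a_def b_def intro!: sum_nonneg)
  have "\<chi> \<bullet>c \<chi> = (\<Sum>r<N. complex_of_real (b r))"
    unfolding cinner_sum[OF chi chi] b_def by (rule sum.cong) (simp_all add: complex_norm_square[symmetric])
  hence sb: "(\<Sum>r<N. b r) = 1" using cn by (metis of_real_eq_1_iff of_real_sum)
  have "(\<Sum>r<N. (\<lambda>_. 1::real) (r div w) * b r) = (\<Sum>i<n+1. (\<lambda>_. 1) i * a i)"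
    unfolding N_def a_def by (rule group_sum[OF wpos])
  hence sa: "(\<Sum>i<n+1. a i) = 1" using sb by simp
  have qc: "query_op n w z \<in> carrier_mat N N" for z
    unfolding query_op_def N_def by (rule mat_carrier)
  define \<phi> where "\<phi> z = U1 *\<^sub>v (query_op n w z *\<^sub>v \<chi>)" for z
  have qic: "query_op n w z *\<^sub>v \<chi> \<in> carrier_vec N" for z using mult_mat_vec_carrier[OF qc chi] .
  have phic: "\<phi> z \<in> carrier_vec N" for z unfolding \<phi>_def using mult_mat_vec_carrier[OF U1C qic] .
  have inner: "\<phi> x \<bullet>c \<phi> y = complex_of_real (\<Sum>i<n+1. a i * sg x i * sg y i)" for x y
  proof -
    have "\<phi> x \<bullet>c \<phi> y = (query_op n w x *\<^sub>v \<chi>) \<bullet>c (query_op n w y *\<^sub>v \<chi>)"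
      unfolding \<phi>_def using unitary_pres[OF U1[folded N_def] qic qic] .
    also have "\<dots> = complex_of_real (\<Sum>r<N. sg x (r div w) * sg y (r div w) * b r)"
      using qinner[OF chi[unfolded N_def]] by (simp add: b_def N_def)
    also have "(\<Sum>r<N. sg x (r div w) * sg y (r div w) * b r) = (\<Sum>i<n+1. (sg x i * sg y i) * a i)"
      unfolding N_def a_def by (rule group_sum[OF wpos])
    finally show ?thesis by (simp add: algebra_simps)
  qed
  have n1: "\<phi> x \<bullet>c \<phi> x = 1" for x
  proof -
    have "(\<Sum>i<n+1. a i * sg x i * sg x i) = (\<Sum>i<n+1. a i)" by (simp add: mult.assoc sg_sq)
    thus ?thesis using inner[of x x] sa by (simp del: of_real_sum sum.lessThan_Suc)
  qed
  have main: "(\<Sum>i<n+1. a i * sg x i * sg y i) = 0" if xy: "x \<in> D" "y \<in> D" "f x \<noteq> f y" for x y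
  proof -
    have PR: "M (f x) + M (f y) = 1\<^sub>m N"
    proof (cases "f x")
      case True
      hence "f y = False" using xy by simp
      thus ?thesis using True MS comm_add_mat[of "M False" N N "M True"] MF MT
        by (auto simp: proj_mat_def N_def)
    next
      case False
      hence "f y = True" using xy by simp
      thus ?thesis using False MS by (simp add: N_def)
    qed
    have P: "proj_mat N (M (f x))" "proj_mat N (M (f y))"
      using MF MT by (cases "f x"; cases "f y"; simp add: N_def)+
    have "\<phi> x \<bullet>c \<phi> y = 0"
      by (rule meas_orth[OF P(1) P(2) PR phic n1 _ phic n1])
         (use ok[OF xy(1)] ok[OF xy(2)] in \<open>simp_all add: \<phi>_def \<chi>_def\<close>)
    hence "complex_of_real (\<Sum>i<n+1. a i * sg x i * sg y i) = 0" using inner[of x y] by simp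
    thus ?thesis by (simp only: of_real_eq_0_iff)
  qed
  show ?thesis using a0 sa main by blast
qed



definition rep :: "nat \<Rightarrow> nat set \<Rightarrow> (bool list \<Rightarrow> real) \<Rightarrow> bool" where
  "rep n V h \<longleftrightarrow> (\<exists>c. (\<forall>S. c S \<noteq> 0 \<longrightarrow> S \<subseteq> V) \<and> (\<forall>x. length x = n \<longrightarrow> h x = mlpoly_eval n c x))"

lemma rep_const: "rep n V (\<lambda>x. k)"
proof -
  define c where "c S = (if S = {} then k else 0)" for S :: "nat set"
  have "mlpoly_eval n c x = k" for x
    unfolding mlpoly_eval_def c_def by (simp add: if_distrib[of "\<lambda>t. t * _"] cong: if_cong)
  thus ?thesis unfolding rep_def by (intro exI[of _ c]) (auto simp: c_def)
qed

lemma rep_lin: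
  assumes "rep n V h1" "rep n V h2"
  shows "rep n V (\<lambda>x. \<alpha> * h1 x + \<beta> * h2 x)"
proof -
  obtain c1 where c1: "\<forall>S. c1 S \<noteq> 0 \<longrightarrow> S \<subseteq> V" "\<forall>x. length x = n \<longrightarrow> h1 x = mlpoly_eval n c1 x"
    using assms(1) unfolding rep_def by blast
  obtain c2 where c2: "\<forall>S. c2 S \<noteq> 0 \<longrightarrow> S \<subseteq> V" "\<forall>x. length x = n \<longrightarrow> h2 x = mlpoly_eval n c2 x"
    using assms(2) unfolding rep_def by blast
  define c where "c S = \<alpha> * c1 S + \<beta> * c2 S" for S
  have "\<forall>S. c S \<noteq> 0 \<longrightarrow> S \<subseteq> V" unfolding c_def using c1(1) c2(1) by (metis add.right_neutral mult_zero_right)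
  moreover have "mlpoly_eval n c x = \<alpha> * mlpoly_eval n c1 x + \<beta> * mlpoly_eval n c2 x" for x
    unfolding mlpoly_eval_def c_def by (simp add: sum.distrib sum_distrib_left algebra_simps)
  ultimately show ?thesis unfolding rep_def using c1(2) c2(2) by (intro exI[of _ c]) auto
qed

lemma rep_mono: "rep n V h \<Longrightarrow> V \<subseteq> W \<Longrightarrow> rep n W h"
  unfolding rep_def by blast

lemma rep_mult_var:
  assumes r: "rep n V h" and v: "v < n" "v \<notin> V"
  shows "rep n (insert v V) (\<lambda>x. bit_val (x ! v) * h x)"
proof -
  obtain c where c: "\<forall>S. c S \<noteq> 0 \<longrightarrow> S \<subseteq> V" "\<forall>x. length x = n \<longrightarrow> h x = mlpoly_eval n c x"
    using r unfolding rep_def by blast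
  define c' where "c' T = (if v \<in> T then c (T - {v}) else 0)" for T
  have sup: "\<forall>T. c' T \<noteq> 0 \<longrightarrow> T \<subseteq> insert v V" using c(1) by (auto simp: c'_def)
  define F where "F x S = (\<Prod>i\<in>S. (bit_val (x ! i) :: real))" for x S
  have ev: "mlpoly_eval n c' x = bit_val (x ! v) * mlpoly_eval n c x" for x
  proof -
    let ?A = "Pow {0..<n}"
    have "mlpoly_eval n c' x = (\<Sum>T\<in>{T\<in>?A. v \<in> T}. c (T - {v}) * F x T)"
      unfolding mlpoly_eval_def F_def[symmetric] c'_def
      by (simp add: sum.inter_filter[symmetric] if_distrib[of "\<lambda>t. t * _"] cong: if_cong)
    also have "{T\<in>?A. v \<in> T} = insert v ` {S\<in>?A. v \<notin> S}"
    proof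
      show "{T\<in>?A. v \<in> T} \<subseteq> insert v ` {S\<in>?A. v \<notin> S}"
      proof
        fix T assume T: "T \<in> {T\<in>?A. v \<in> T}"
        hence "T = insert v (T - {v})" by auto
        moreover have "T - {v} \<in> {S\<in>?A. v \<notin> S}" using T by auto
        ultimately show "T \<in> insert v ` {S\<in>?A. v \<notin> S}" by blast
      qed
      show "insert v ` {S\<in>?A. v \<notin> S} \<subseteq> {T\<in>?A. v \<in> T}" using v by auto
    qed
    also have "(\<Sum>T\<in>insert v ` {S\<in>?A. v \<notin> S}. c (T - {v}) * F x T) = (\<Sum>S\<in>{S\<in>?A. v \<notin> S}. c (insert v S - {v}) * F x (insert v S))"
    proof -
      have inj: "inj_on (insert v) {S\<in>?A. v \<notin> S}" unfolding inj_on_def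
        by (metis (mono_tags, lifting) Diff_insert_absorb mem_Collect_eq)
      show ?thesis unfolding sum.reindex[OF inj] o_def ..
    qed
    also have "\<dots> = (\<Sum>S\<in>{S\<in>?A. v \<notin> S}. bit_val (x ! v) * (c S * F x S))"
    proof (rule sum.cong)
      fix S assume S: "S \<in> {S\<in>?A. v \<notin> S}"
      hence "finite S" using finite_subset[of S "{0..<n}"] by auto
      thus "c (insert v S - {v}) * F x (insert v S) = bit_val (x ! v) * (c S * F x S)"
        using S by (simp add: F_def)
    qed simp
    also have "\<dots> = bit_val (x ! v) * (\<Sum>S\<in>{S\<in>?A. v \<notin> S}. c S * F x S)"
      by (simp add: sum_distrib_left)
    also have "(\<Sum>S\<in>{S\<in>?A. v \<notin> S}. c S * F x S) = (\<Sum>S\<in>?A. c S * F x S)"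
    proof (rule sum.mono_neutral_left)
      show "\<forall>S\<in>?A - {S\<in>?A. v \<notin> S}. c S * F x S = 0" using c(1) v by auto
    qed auto
    finally show ?thesis unfolding mlpoly_eval_def F_def by simp
  qed
  show ?thesis unfolding rep_def using sup ev c(2) by (intro exI[of _ c']) auto
qed

lemma rep_eq: "rep n V g \<Longrightarrow> (\<And>x. length x = n \<Longrightarrow> h x = g x) \<Longrightarrow> rep n V h"
  unfolding rep_def by metis

lemma rep_dep:
  assumes "finite V" "V \<subseteq> {0..<n}"
    and "\<And>x y. length x = n \<Longrightarrow> length y = n \<Longrightarrow> (\<forall>i\<in>V. x ! i = y ! i) \<Longrightarrow> h x = h y"
  shows "rep n V h"
  using assms
proof (induction V arbitrary: h rule: finite_induct)
  case empty
  have "rep n {} (\<lambda>x. h (replicate n False))" by (rule rep_const)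
  thus ?case by (rule rep_eq) (rule empty.prems(2), simp_all)
next
  case (insert v V)
  have vn: "v < n" using insert.prems(1) by auto
  have VS: "V \<subseteq> {0..<n}" using insert.prems(1) by auto
  define h1 where "h1 x = h (x[v := False])" for x
  define h2 where "h2 x = h (x[v := True])" for x
  have dep: "h (x[v := b]) = h (y[v := b])" if "length x = n" "length y = n" "\<forall>i\<in>V. x ! i = y ! i" for x y b
  proof (rule insert.prems(2))
    show "length (x[v := b]) = n" "length (y[v := b]) = n" using that by simp_all
    show "\<forall>i\<in>insert v V. x[v := b] ! i = y[v := b] ! i"
      using that vn by (auto simp: nth_list_update)
  qed
  have r1: "rep n V h1"
    by (rule insert.IH[OF VS]) (unfold h1_def, rule dep, assumption+)
  have r2: "rep n V h2"
    by (rule insert.IH[OF VS]) (unfold h2_def, rule dep, assumption+)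
  have "rep n V (\<lambda>x. 1 * h2 x + (-1) * h1 x)" by (rule rep_lin[OF r2 r1])
  hence "rep n (insert v V) (\<lambda>x. bit_val (x ! v) * (1 * h2 x + (-1) * h1 x))"
    by (rule rep_mult_var[OF _ vn insert.hyps(2)])
  moreover have "rep n (insert v V) h1" using rep_mono[OF r1] by blast
  ultimately have R: "rep n (insert v V) (\<lambda>x. 1 * h1 x + 1 * (bit_val (x ! v) * (1 * h2 x + (-1) * h1 x)))"
    by (intro rep_lin)
  show ?case
  proof (rule rep_eq[OF R])
    fix x :: "bool list" assume "length x = n"
    show "h x = 1 * h1 x + 1 * (bit_val (x ! v) * (1 * h2 x + (-1) * h1 x))"
    proof (cases "x ! v")
      case True
      hence "x[v := True] = x" by (metis list_update_id)
      thus ?thesis using True by (simp add: h1_def h2_def bit_val_def)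
    next
      case False
      hence "x[v := False] = x" by (metis list_update_id)
      thus ?thesis using False by (simp add: h1_def h2_def bit_val_def)
    qed
  qed
qed



theorem theorem4:
  fixes n k :: nat and D :: "bool list set" and f :: "bool list \<Rightarrow> bool"
  assumes "D \<subseteq> bits n"
    and "\<exists>x\<in>D. \<exists>y\<in>D. f x \<noteq> f y"
    and "depends_on_bits n D f k"
    and "exact_1query n D f"
  shows "vec_space.rank (n + 1) (Gf1 n D f False) \<in> {1..n}
       \<and> vec_space.rank (n + 1) (Gf1 n D f True) \<in> {1..n}
       \<and> vec_space.rank (n + 1) (Gf1 n D f False) + vec_space.rank (n + 1) (Gf1 n D f True)
           \<le> 2 * n + 2 - k"
proof -
  define m where "m = n + 1"
  have m0: "0 < m" by (simp add: m_def)
  obtain a :: "nat \<Rightarrow> real" where a0: "\<forall>i. 0 \<le> a i" and sa: "(\<Sum>i<n+1. a i) = 1"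
    and orth: "\<forall>x\<in>D. \<forall>y\<in>D. f x \<noteq> f y \<longrightarrow> (\<Sum>i<n+1. a i * sg x i * sg y i) = 0"
    using quantum_weights[OF assms(4)] by blast
  have lenD: "\<And>x. x \<in> D \<Longrightarrow> length x = n" using assms(1) by (auto simp: bits_def)
  have Pc: "Pvec1 n x \<in> carrier_vec m" for x by (simp add: Pvec1_def m_def)
  have cfP: "cf (Pvec1 n x) i = sg x i" if "i < m" for x i
    using that by (auto simp: cf_def Pvec1_def sg_def bit_val_def m_def)
  have BfP: "Bf m a (Pvec1 n x) (Pvec1 n y) = (\<Sum>i<n+1. a i * sg x i * sg y i)" for x y
    unfolding Bf_def by (rule sum.cong) (auto simp: cfP m_def)
  have finD: "finite D"
  proof (rule finite_subset[OF assms(1)])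
    show "finite (bits n)" unfolding bits_def using finite_lists_length_eq[of "UNIV :: bool set" n] by simp
  qed
  define X where "X b = {x\<in>D. f x = b}" for b
  have finX: "finite (X b)" for b using finD by (simp add: X_def)
  define G where "G b = Gf1 n D f b" for b
  have Gdef: "G b = mat_of_cols m (map (Pvec1 n) (sorted_list_of_set (X b)))" for b
    by (simp add: G_def Gf1_def X_def m_def)
  have Gc: "G b \<in> carrier_mat m (length (map (Pvec1 n) (sorted_list_of_set (X b))))" for b
    unfolding Gdef by (rule mat_of_cols_carrier(1))
  have colsG: "set (cols (G b)) = Pvec1 n ` X b" for b
  proof -
    have "set (map (Pvec1 n) (sorted_list_of_set (X b))) \<subseteq> carrier_vec m" using Pc by auto
    hence "cols (G b) = map (Pvec1 n) (sorted_list_of_set (X b))" unfolding Gdef by simp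
    thus ?thesis using finX by simp
  qed
  obtain x0 y0 where x0: "x0 \<in> D" "f x0 = False" and y0: "y0 \<in> D" "f y0 = True"
    using assms(2) by (metis (full_types))
  have orthP: "Bf m a v w = 0" if vw: "v \<in> set (cols (G False))" "w \<in> set (cols (G True))" for v w
  proof -
    obtain x where x: "x \<in> D" "f x = False" "v = Pvec1 n x" using vw(1) colsG X_def by auto
    obtain y where y: "y \<in> D" "f y = True" "w = Pvec1 n y" using vw(2) colsG X_def by auto
    show ?thesis using orth x y BfP by simp
  qed
  have Bsym: "Bf m a v w = Bf m a w v" for v w unfolding Bf_def by (simp add: algebra_simps)
  obtain ws0 where ws0: "set ws0 \<subseteq> set (cols (G False))" "length ws0 = vec_space.rank m (G False)" "ktriv m ws0"
    using vec_space.rank_witness[OF Gc] by blast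
  obtain ws1 where ws1: "set ws1 \<subseteq> set (cols (G True))" "length ws1 = vec_space.rank m (G True)" "ktriv m ws1"
    using vec_space.rank_witness[OF Gc] by blast
  have cs0: "set ws0 \<subseteq> carrier_vec m" using ws0(1) colsG Pc by auto
  have cs1: "set ws1 \<subseteq> carrier_vec m" using ws1(1) colsG Pc by auto
  have sumb: "length ws0 + length ws1 \<le> m + card {i. i < m \<and> a i = 0}"
    by (rule main_count[OF m0 _ cs0 cs1 ws0(3) ws1(3)]) (use a0 in simp, use orthP ws0(1) ws1(1) in blast)
  have uu: "Bf m a (Pvec1 n z) (Pvec1 n z) = 1" for z
  proof -
    have "Bf m a (Pvec1 n z) (Pvec1 n z) = (\<Sum>i<n+1. a i)" unfolding BfP
      by (rule sum.cong) (simp_all add: mult.assoc sg_sq)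
    thus ?thesis using sa by simp
  qed
  have y0c: "Pvec1 n y0 \<in> set (cols (G True))" unfolding colsG X_def using y0 by blast
  have x0c: "Pvec1 n x0 \<in> set (cols (G False))" unfolding colsG X_def using x0 by blast
  have ub0: "length ws0 + 1 \<le> m"
  proof (rule rank_le_count[OF m0 cs0 Pc[of y0] ws0(3)])
    show "Bf m a v (Pvec1 n y0) = 0" if "v \<in> set ws0" for v using orthP ws0(1) y0c that by blast
    show "Bf m a (Pvec1 n y0) (Pvec1 n y0) \<noteq> 0" using uu by simp
  qed
  have ub1: "length ws1 + 1 \<le> m"
  proof (rule rank_le_count[OF m0 cs1 Pc[of x0] ws1(3)])
    show "Bf m a v (Pvec1 n x0) = 0" if "v \<in> set ws1" for v
    proof -
      have "Bf m a (Pvec1 n x0) v = 0" using orthP ws1(1) x0c that by blast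
      thus ?thesis using Bsym[of v "Pvec1 n x0"] by simp
    qed
    show "Bf m a (Pvec1 n x0) (Pvec1 n x0) \<noteq> 0" using uu by simp
  qed
  have kt1: "ktriv m [Pvec1 n z]" for z unfolding ktriv_def
  proof (intro ballI impI)
    fix c :: "real vec" assume c: "c \<in> carrier_vec (length [Pvec1 n z])" and e: "mat_of_cols m [Pvec1 n z] *\<^sub>v c = 0\<^sub>v m"
    have "(mat_of_cols m [Pvec1 n z] *\<^sub>v c) $ 0 = (\<Sum>j<length [Pvec1 n z]. [Pvec1 n z] ! j $ 0 * c $ j)"
      by (rule mvc_index[OF m0]) (use c in simp)
    also have "\<dots> = c $ 0" by (simp add: Pvec1_def)
    finally have "c $ 0 = (mat_of_cols m [Pvec1 n z] *\<^sub>v c) $ 0" by simp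
    also have "\<dots> = 0\<^sub>v m $ 0" using e by (rule arg_cong)
    finally have "c $ 0 = 0" using m0 by simp
    thus "c = 0\<^sub>v (length [Pvec1 n z])" using c by (auto intro!: eq_vecI)
  qed
  have lb0: "1 \<le> vec_space.rank m (G False)"
    using vec_space.ktriv_rank_ge[OF Gc kt1, of x0] x0c by simp
  have lb1: "1 \<le> vec_space.rank m (G True)"
    using vec_space.ktriv_rank_ge[OF Gc kt1, of y0] y0c by simp
  define V where "V = {i. i < n \<and> 0 < a (Suc i)}"
  have finV: "finite V" "V \<subseteq> {0..<n}" by (auto simp: V_def)
  have fdep: "f x = f y" if xy: "x \<in> D" "y \<in> D" "\<forall>i\<in>V. x ! i = y ! i" for x y
  proof (rule ccontr)
    assume ne: "f x \<noteq> f y"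
    have "(\<Sum>i<n+1. a i * sg x i * sg y i) = (\<Sum>i<n+1. a i)"
    proof (rule sum.cong)
      fix i assume i: "i \<in> {..<n+1}"
      show "a i * sg x i * sg y i = a i"
      proof (cases "a i = 0")
        case False
        hence ap: "0 < a i" using a0 by (simp add: less_le)
        have "sg x i = sg y i"
        proof (cases i)
          case (Suc j)
          hence "j \<in> V" using i ap by (auto simp: V_def)
          thus ?thesis using xy(3) Suc by (simp add: sg_def)
        qed (simp add: sg_def)
        thus ?thesis by (simp add: mult.assoc sg_sq)
      qed simp
    qed simp
    thus False using orth xy ne sa by auto
  qed
  define agr where "agr x y \<longleftrightarrow> (\<forall>i\<in>V. x ! i = (y::bool list) ! i)" for x y
  define h where "h x = (if \<exists>y\<in>D. agr x y then bit_val (f (SOME y. y \<in> D \<and> agr x y)) else (0::real))" for x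
  have hdep: "h x = h y" if "\<forall>i\<in>V. x ! i = y ! i" for x y
  proof -
    have "(\<lambda>z. z \<in> D \<and> agr x z) = (\<lambda>z. z \<in> D \<and> agr y z)" using that by (auto simp: agr_def)
    thus ?thesis unfolding h_def by (metis (no_types, lifting))
  qed
  have hD: "h x = bit_val (f x)" if x: "x \<in> D" for x
  proof -
    have ex: "\<exists>y. y \<in> D \<and> agr x y" using x by (auto simp: agr_def)
    define y where "y = (SOME y. y \<in> D \<and> agr x y)"
    have y: "y \<in> D" "agr x y" using someI_ex[OF ex] by (auto simp: y_def)
    have "f y = f x" using fdep[OF y(1) x] y(2) by (auto simp: agr_def)
    thus ?thesis unfolding h_def using ex y_def by auto
  qed
  have "rep n V h" by (rule rep_dep[OF finV]) (rule hdep, simp)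
  then obtain c where c: "\<forall>S. c S \<noteq> 0 \<longrightarrow> S \<subseteq> V" "\<forall>x. length x = n \<longrightarrow> h x = mlpoly_eval n c x"
    unfolding rep_def by blast
  have cD: "\<forall>x\<in>D. mlpoly_eval n c x = bit_val (f x)" using c(2) hD lenD by auto
  have "mlpoly_vars n c \<subseteq> V" using c(1) unfolding mlpoly_vars_def by auto
  hence cv: "card (mlpoly_vars n c) \<le> card V" using card_mono[OF finV(1)] by blast
  have "k = (LEAST m. \<exists>c. (\<forall>x\<in>D. mlpoly_eval n c x = bit_val (f x)) \<and> card (mlpoly_vars n c) = m)"
    using assms(3) unfolding depends_on_bits_def .
  also have "\<dots> \<le> card (mlpoly_vars n c)" by (rule Least_le) (use cD in blast)
  finally have kV: "k \<le> card V" using cv by simp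
  define Sp where "Sp = {i. i < m \<and> 0 < a i}"
  define Qz where "Qz = {i. i < m \<and> a i = 0}"
  have "Suc ` V \<subseteq> Sp" by (auto simp: V_def Sp_def m_def)
  hence "card (Suc ` V) \<le> card Sp" by (rule card_mono[rotated]) (simp add: Sp_def)
  hence VS: "card V \<le> card Sp" by (simp add: card_image)
  have "Sp \<union> Qz = {..<m}" "Sp \<inter> Qz = {}" using a0 by (auto simp: Sp_def Qz_def less_le)
  hence "card Sp + card Qz = m" using card_Un_disjoint[of Sp Qz] by (simp add: Sp_def Qz_def)
  hence fin: "length ws0 + length ws1 + k \<le> 2 * m"
    using sumb kV VS by (simp add: Qz_def)
  show ?thesis
    using fin ub0 ub1 lb0 lb1 ws0(2) ws1(2) by (simp add: G_def m_def)
qed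

end
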